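(* (1) Treegrams need not be join-irreducible in $\mathbf{Cliqgm}(X)$: for $X=\{x,y,z\}$ there is a treegram over $X$ which equals the join in $\mathbf{Cliqgm}(X)$ of three cliquegrams each different from it. (2) Treegrams are join-dense in $\mathbf{Cliqgm}(X)$: for every finite set $X$, every cliquegram over $X$ is the join in $\mathbf{Cliqgm}(X)$ (computed pointwise in $\mathbf{Cliq}(X)$) of finitely many treegrams over $X$.
   Context: A clique-set of $X$ is a set $\mathcal{C}$ of nonempty subsets of $X$ such that (i) no member is contained in another, and (ii) for every nonempty $Y\subset X$, if every pair $y,y'\in Y$ (possibly equal) lies in some member of $\mathcal{C}$, then $Y$ lies in some member of $\mathcal{C}$. $\mathbf{Cliq}(X)$ is ordered by $\mathcal{C}\leq\mathcal{C}'$ iff every member of $\mathcal{C}$ is contained in a member of $\mathcal{C}'$; the join of clique-sets is the set of maximal cliques of the union of their graphs (vertices = union of members, edges = pairs of distinct elements lying in a common member). A cliquegram over $X$ is a map $C_X:\mathbb{R}\to\mathbf{Cliq}(X)$ that is monotone, equals $\{X\}$ for all large $t$ and $\emptyset$ for all small $t$, and is constant on $(-\infty,a_1)$, on each $[a_i,a_{i+1})$ and on $[a_n,\infty)$ for some reals $a_1<\dots<a_n$; $\mathbf{Cliqgm}(X)$ is the lattice of cliquegrams with pointwise order and operations. A treegram over $X$ is a cliquegram $C_X$ such that each $C_X(t)$ is a subpartition of $X$ (pairwise disjoint members). Join-irreducible: not the bottom element and not equal to a join of two elements both different from it. *)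

theory Defs
  imports Main "HOL.Real"
begin

definition is_cliqset :: "'a set \<Rightarrow> 'a set set \<Rightarrow> bool" where
  "is_cliqset X C \<longleftrightarrow>
     (\<forall>c\<in>C. c \<noteq> {} \<and> c \<subseteq> X) \<and>
     (\<forall>c\<in>C. \<forall>c'\<in>C. c \<subseteq> c' \<longrightarrow> c = c') \<and>
     (\<forall>Y. Y \<noteq> {} \<and> Y \<subseteq> X \<and> (\<forall>y\<in>Y. \<forall>y'\<in>Y. \<exists>c\<in>C. y \<in> c \<and> y' \<in> c)
          \<longrightarrow> (\<exists>c\<in>C. Y \<subseteq> c))"

definition Cliq :: "'a set \<Rightarrow> 'a set set set" where
  "Cliq X = {C. is_cliqset X C}"

definition cliq_le :: "'a set set \<Rightarrow> 'a set set \<Rightarrow> bool" where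
  "cliq_le C D \<longleftrightarrow> (\<forall>c\<in>C. \<exists>d\<in>D. c \<subseteq> d)"

definition gr_vertices :: "'a set set set \<Rightarrow> 'a set" where
  "gr_vertices S = \<Union>(\<Union>S)"

definition gr_adj :: "'a set set set \<Rightarrow> 'a \<Rightarrow> 'a \<Rightarrow> bool" where
  "gr_adj S u v \<longleftrightarrow> u \<noteq> v \<and> (\<exists>C\<in>S. \<exists>c\<in>C. u \<in> c \<and> v \<in> c)"

definition gr_clique :: "'a set set set \<Rightarrow> 'a set \<Rightarrow> bool" where
  "gr_clique S K \<longleftrightarrow> K \<noteq> {} \<and> K \<subseteq> gr_vertices S \<and>
     (\<forall>u\<in>K. \<forall>v\<in>K. u \<noteq> v \<longrightarrow> gr_adj S u v)"

definition cliq_Join :: "'a set set set \<Rightarrow> 'a set set" where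
  "cliq_Join S = {K. gr_clique S K \<and> \<not> (\<exists>K'. gr_clique S K' \<and> K \<subset> K')}"

definition cliq_join :: "'a set set \<Rightarrow> 'a set set \<Rightarrow> 'a set set" where
  "cliq_join C D = cliq_Join {C, D}"

definition cliquegram :: "'a set \<Rightarrow> (real \<Rightarrow> 'a set set) \<Rightarrow> bool" where
  "cliquegram X C \<longleftrightarrow>
     (\<forall>t. C t \<in> Cliq X) \<and>
     (\<forall>s t. s \<le> t \<longrightarrow> cliq_le (C s) (C t)) \<and>
     (\<exists>T. \<forall>t\<ge>T. C t = {X}) \<and>
     (\<exists>T. \<forall>t\<le>T. C t = {}) \<and>
     (\<exists>A::real set. finite A \<and>
        (\<forall>s t. s \<le> t \<and> \<not> (\<exists>a\<in>A. s < a \<and> a \<le> t) \<longrightarrow> C s = C t))"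

definition subpartition :: "'a set set \<Rightarrow> bool" where
  "subpartition C \<longleftrightarrow> (\<forall>c\<in>C. \<forall>c'\<in>C. c \<noteq> c' \<longrightarrow> c \<inter> c' = {})"

definition treegram :: "'a set \<Rightarrow> (real \<Rightarrow> 'a set set) \<Rightarrow> bool" where
  "treegram X C \<longleftrightarrow> cliquegram X C \<and> (\<forall>t. subpartition (C t))"

end

theory Submission
  imports Defs
begin

lemma cliqset_empty: "is_cliqset X {}"
  unfolding is_cliqset_def by auto

lemma cliqset_single: assumes "c \<noteq> {}" "c \<subseteq> X" shows "is_cliqset X {c}"
  using assms unfolding is_cliqset_def by auto

lemma join_eq:
  assumes D: "is_cliqset X D"
    and h2: "\<forall>E\<in>S. \<forall>c\<in>E. \<exists>d\<in>D. c \<subseteq> d"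
    and h3: "\<forall>d\<in>D. \<exists>E\<in>S. d \<in> E"
  shows "cliq_Join S = D"
proof -
  have D1: "\<forall>c\<in>D. c \<noteq> {} \<and> c \<subseteq> X" using D unfolding is_cliqset_def by (elim conjE)
  have D2: "\<forall>c\<in>D. \<forall>c'\<in>D. c \<subseteq> c' \<longrightarrow> c = c'" using D unfolding is_cliqset_def by (elim conjE)
  have D3': "\<forall>Y. Y \<noteq> {} \<and> Y \<subseteq> X \<and> (\<forall>y\<in>Y. \<forall>y'\<in>Y. \<exists>c\<in>D. y \<in> c \<and> y' \<in> c)
          \<longrightarrow> (\<exists>c\<in>D. Y \<subseteq> c)" using D unfolding is_cliqset_def by (elim conjE)
  have ins: "\<exists>d\<in>D. u \<in> d" if a: "E \<in> S" "c \<in> E" "u \<in> c" for E c u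
  proof -
    obtain d where "d \<in> D" "c \<subseteq> d" using h2 a(1,2) by meson
    then show ?thesis using a(3) by (meson subsetD)
  qed
  have ins2: "\<exists>d\<in>D. u \<in> d \<and> v \<in> d" if a: "E \<in> S" "c \<in> E" "u \<in> c" "v \<in> c" for E c u v
  proof -
    obtain d where "d \<in> D" "c \<subseteq> d" using h2 a(1,2) by meson
    then show ?thesis using a(3,4) by (meson subsetD)
  qed
  have cl: "gr_clique S K \<longleftrightarrow> (K \<noteq> {} \<and> (\<exists>d\<in>D. K \<subseteq> d))" for K
  proof
    assume g: "gr_clique S K"
    have gK: "K \<noteq> {}" "K \<subseteq> gr_vertices S" "\<forall>u\<in>K. \<forall>v\<in>K. u \<noteq> v \<longrightarrow> gr_adj S u v"
      using g unfolding gr_clique_def by blast+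
    have vin: "\<exists>d\<in>D. u \<in> d" if "u \<in> K" for u
    proof -
      have "u \<in> gr_vertices S" using gK(2) that by (rule subsetD)
      then obtain E c where "E \<in> S" "c \<in> E" "u \<in> c" unfolding gr_vertices_def by auto
      then show ?thesis by (rule ins)
    qed
    have vert: "K \<subseteq> X"
    proof
      fix u assume "u \<in> K"
      then obtain d where "d \<in> D" "u \<in> d" using vin by blast
      then show "u \<in> X" using D1 by auto
    qed
    have "\<forall>y\<in>K. \<forall>y'\<in>K. \<exists>c\<in>D. y \<in> c \<and> y' \<in> c"
    proof (intro ballI)
      fix y y' assume yy: "y \<in> K" "y' \<in> K"
      show "\<exists>c\<in>D. y \<in> c \<and> y' \<in> c"
      proof (cases "y = y'")
        case True
        then show ?thesis using vin[OF yy(1)] by simp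
      next
        case False
        then have "gr_adj S y y'" using gK(3) yy by simp
        then obtain E c where "E \<in> S" "c \<in> E" "y \<in> c" "y' \<in> c" unfolding gr_adj_def by auto
        then show ?thesis by (rule ins2)
      qed
    qed
    then have "\<exists>c\<in>D. K \<subseteq> c" using D3' gK(1) vert by simp
    then show "K \<noteq> {} \<and> (\<exists>d\<in>D. K \<subseteq> d)" using gK(1) by simp
  next
    assume "K \<noteq> {} \<and> (\<exists>d\<in>D. K \<subseteq> d)"
    then obtain d where K: "K \<noteq> {}" "d \<in> D" "K \<subseteq> d" by auto
    then obtain E where E: "E \<in> S" "d \<in> E" using h3 by auto
    have "K \<subseteq> gr_vertices S"
    proof
      fix u assume "u \<in> K" then have "u \<in> d" using K(3) by auto
      then show "u \<in> gr_vertices S" unfolding gr_vertices_def using E by auto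
    qed
    moreover have "\<forall>u\<in>K. \<forall>v\<in>K. u \<noteq> v \<longrightarrow> gr_adj S u v"
    proof (intro ballI impI)
      fix u v assume "u \<in> K" "v \<in> K" "u \<noteq> v"
      then show "gr_adj S u v" unfolding gr_adj_def using E K(3) by auto
    qed
    ultimately show "gr_clique S K" unfolding gr_clique_def using K(1) by simp
  qed
  have dcl: "gr_clique S d" if "d \<in> D" for d
    using cl D1 that by auto
  show ?thesis
  proof
    show "cliq_Join S \<subseteq> D"
    proof
      fix K assume "K \<in> cliq_Join S"
      then have a: "gr_clique S K" and b: "\<not> (\<exists>K'. gr_clique S K' \<and> K \<subset> K')"
        unfolding cliq_Join_def by auto
      then obtain d where d: "d \<in> D" "K \<subseteq> d" using cl by auto
      have "\<not> K \<subset> d" using b dcl[OF d(1)] by auto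
      then have "K = d" using d(2) by auto
      then show "K \<in> D" using d(1) by simp
    qed
  next
    show "D \<subseteq> cliq_Join S"
    proof
      fix d assume d: "d \<in> D"
      have "\<not> (\<exists>K'. gr_clique S K' \<and> d \<subset> K')"
      proof
        assume "\<exists>K'. gr_clique S K' \<and> d \<subset> K'"
        then obtain K' where k1: "gr_clique S K'" and k2: "d \<subset> K'" by auto
        then obtain d' where d': "d' \<in> D" "K' \<subseteq> d'" using cl by auto
        then have "d \<subseteq> d'" using k2 by auto
        then have "d = d'" using D2 d d'(1) by auto
        then show False using k2 d'(2) by auto
      qed
      then show "d \<in> cliq_Join S" unfolding cliq_Join_def using dcl[OF d] by simp
    qed
  qed
qed

definition Tg :: "real \<Rightarrow> 'a set \<Rightarrow> 'a set \<Rightarrow> real \<Rightarrow> real \<Rightarrow> 'a set set" where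
  "Tg s c X tp t = (if t < s then {} else if t < tp then {c} else {X})"

lemma Tg_treegram: assumes "c \<noteq> {}" "c \<subseteq> X" shows "treegram X (Tg s c X tp)"
proof -
  have X: "X \<noteq> {}" using assms by auto
  have 1: "\<forall>t. Tg s c X tp t \<in> Cliq X"
    unfolding Tg_def Cliq_def using cliqset_empty cliqset_single[OF assms] cliqset_single[OF X]
    by auto
  have 2: "\<forall>t1 t2. t1 \<le> t2 \<longrightarrow> cliq_le (Tg s c X tp t1) (Tg s c X tp t2)"
    unfolding Tg_def cliq_le_def using assms by auto
  have 3: "\<exists>T. \<forall>t\<ge>T. Tg s c X tp t = {X}"
    by (rule exI[of _ "max s tp"]) (auto simp: Tg_def)
  have 4: "\<exists>T. \<forall>t\<le>T. Tg s c X tp t = {}"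
    by (rule exI[of _ "s - 1"]) (auto simp: Tg_def)
  have 5: "\<exists>A::real set. finite A \<and>
        (\<forall>t1 t2. t1 \<le> t2 \<and> \<not> (\<exists>a\<in>A. t1 < a \<and> a \<le> t2) \<longrightarrow> Tg s c X tp t1 = Tg s c X tp t2)"
  proof (rule exI[of _ "{s, tp}"], intro conjI allI impI)
    fix t1 t2 :: real assume h: "t1 \<le> t2 \<and> \<not> (\<exists>a\<in>{s, tp}. t1 < a \<and> a \<le> t2)"
    then have "(t1 < s \<longleftrightarrow> t2 < s)" "(t1 < tp \<longleftrightarrow> t2 < tp)" by auto
    then show "Tg s c X tp t1 = Tg s c X tp t2" unfolding Tg_def by simp
  qed simp
  have 6: "\<forall>t. subpartition (Tg s c X tp t)"
    unfolding Tg_def subpartition_def by auto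
  show ?thesis unfolding treegram_def cliquegram_def using 1 2 3 4 5 6 by blast
qed

lemma join2_eq:
  assumes "is_cliqset X D" "\<forall>c\<in>A. \<exists>d\<in>D. c \<subseteq> d" "\<forall>c\<in>B. \<exists>d\<in>D. c \<subseteq> d"
    "\<forall>d\<in>D. d \<in> A \<or> d \<in> B"
  shows "cliq_join A B = D"
  unfolding cliq_join_def
proof (rule join_eq[OF assms(1)])
  show "\<forall>E\<in>{A, B}. \<forall>c\<in>E. \<exists>d\<in>D. c \<subseteq> d" using assms(2,3) by blast
  show "\<forall>d\<in>D. \<exists>E\<in>{A, B}. d \<in> E" using assms(4) by blast
qed

lemma part1:
  assumes d: "(x::'a) \<noteq> y" "y \<noteq> z" "x \<noteq> z"
  shows "\<exists>T C1 C2 C3. treegram {x, y, z} T \<and>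
              cliquegram {x, y, z} C1 \<and> cliquegram {x, y, z} C2 \<and> cliquegram {x, y, z} C3 \<and>
              C1 \<noteq> T \<and> C2 \<noteq> T \<and> C3 \<noteq> T \<and>
              T = (\<lambda>t. cliq_join (cliq_join (C1 t) (C2 t)) (C3 t))"
proof -
  let ?X = "{x, y, z}"
  let ?T = "Tg 0 ?X ?X 1"
  let ?C1 = "Tg 0 {x, y} ?X 1"
  let ?C2 = "Tg 0 {y, z} ?X 1"
  let ?C3 = "Tg 0 {x, z} ?X 1"
  have t0: "treegram ?X ?T" by (rule Tg_treegram) auto
  have t1: "treegram ?X ?C1" by (rule Tg_treegram) auto
  have t2: "treegram ?X ?C2" by (rule Tg_treegram) auto
  have t3: "treegram ?X ?C3" by (rule Tg_treegram) auto
  have zn: "z \<notin> {x, y}" "x \<notin> {y, z}" "y \<notin> {x, z}" using d by auto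
  have ne1: "?C1 \<noteq> ?T"
  proof
    assume "?C1 = ?T" then have "?C1 0 = ?T 0" by simp
    then have "{x, y} = ?X" by (simp add: Tg_def)
    then show False using zn by blast
  qed
  have ne2: "?C2 \<noteq> ?T"
  proof
    assume "?C2 = ?T" then have "?C2 0 = ?T 0" by simp
    then have "{y, z} = ?X" by (simp add: Tg_def)
    then show False using zn by blast
  qed
  have ne3: "?C3 \<noteq> ?T"
  proof
    assume "?C3 = ?T" then have "?C3 0 = ?T 0" by simp
    then have "{x, z} = ?X" by (simp add: Tg_def)
    then show False using zn by blast
  qed
  have path: "is_cliqset ?X {{x, y}, {y, z}}"
    unfolding is_cliqset_def
  proof (intro conjI allI impI)
    fix Y assume h: "Y \<noteq> {} \<and> Y \<subseteq> ?X \<and> (\<forall>a\<in>Y. \<forall>b\<in>Y. \<exists>c\<in>{{x, y}, {y, z}}. a \<in> c \<and> b \<in> c)"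
    have nxz: "\<not> (x \<in> Y \<and> z \<in> Y)"
    proof
      assume "x \<in> Y \<and> z \<in> Y"
      then obtain c where "c \<in> {{x, y}, {y, z}}" "x \<in> c" "z \<in> c" using h by blast
      then show False using d by auto
    qed
    have "Y \<subseteq> ?X" using h by simp
    then have "Y \<subseteq> {x, y} \<or> Y \<subseteq> {y, z}" using nxz by blast
    then show "\<exists>c\<in>{{x, y}, {y, z}}. Y \<subseteq> c" by blast
  next
    show "\<forall>c\<in>{{x, y}, {y, z}}. c \<noteq> {} \<and> c \<subseteq> ?X" by auto
  next
    show "\<forall>c\<in>{{x, y}, {y, z}}. \<forall>c'\<in>{{x, y}, {y, z}}. c \<subseteq> c' \<longrightarrow> c = c'"
      using zn by auto
  qed
  have tri: "is_cliqset ?X {?X}" by (rule cliqset_single) auto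
  have eq: "?T t = cliq_join (cliq_join (?C1 t) (?C2 t)) (?C3 t)" for t
  proof -
    consider "t < 0" | "0 \<le> t" "t < 1" | "1 \<le> t" by linarith
    then show ?thesis
    proof cases
      case 1
      then have e: "?T t = {}" "?C1 t = {}" "?C2 t = {}" "?C3 t = {}" by (simp_all add: Tg_def)
      have "cliq_join {} {} = ({} :: 'a set set)"
        by (rule join2_eq[OF cliqset_empty]) simp_all
      then show ?thesis unfolding e by simp
    next
      case 2
      then have e: "?T t = {?X}" "?C1 t = {{x,y}}" "?C2 t = {{y,z}}" "?C3 t = {{x,z}}"
        by (simp_all add: Tg_def)
      have j1: "cliq_join {{x,y}} {{y,z}} = {{x, y}, {y, z}}"
        by (rule join2_eq[OF path]) simp_all
      have j2: "cliq_join {{x, y}, {y, z}} {{x,z}} = {?X}"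
      proof -
        let ?S = "{{{x, y}, {y, z}}, {{x,z}}}"
        have vx: "gr_vertices ?S = ?X" unfolding gr_vertices_def by auto
        have adj: "gr_adj ?S u v \<longleftrightarrow> u \<noteq> v \<and> u \<in> ?X \<and> v \<in> ?X" for u v
          unfolding gr_adj_def by auto
        have cl: "gr_clique ?S K \<longleftrightarrow> K \<noteq> {} \<and> K \<subseteq> ?X" for K
          unfolding gr_clique_def vx adj by blast
        show ?thesis unfolding cliq_join_def cliq_Join_def cl by blast
      qed
      show ?thesis unfolding e j1 j2 ..
    next
      case 3
      then have e: "?T t = {?X}" "?C1 t = {?X}" "?C2 t = {?X}" "?C3 t = {?X}"
        by (simp_all add: Tg_def)
      have j: "cliq_join {?X} {?X} = {?X}"
        by (rule join2_eq[OF tri]) simp_all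
      show ?thesis unfolding e j j ..
    qed
  qed
  have cg: "cliquegram ?X ?C1" "cliquegram ?X ?C2" "cliquegram ?X ?C3"
    using t1 t2 t3 unfolding treegram_def by blast+
  have "?T = (\<lambda>t. cliq_join (cliq_join (?C1 t) (?C2 t)) (?C3 t))" using eq by (rule ext)
  then show ?thesis using t0 cg ne1 ne2 ne3 by blast
qed

lemma part2:
  assumes fin: "finite (X::'b set)" and C: "cliquegram X C"
  shows "\<exists>F. finite F \<and> (\<forall>T\<in>F. treegram X T) \<and> C = (\<lambda>t. cliq_Join ((\<lambda>T. T t) ` F))"
proof -
  have C1: "\<forall>t. C t \<in> Cliq X" and C2: "\<forall>s t. s \<le> t \<longrightarrow> cliq_le (C s) (C t)"
    and C3: "\<exists>T. \<forall>t\<ge>T. C t = {X}" and C4: "\<exists>T. \<forall>t\<le>T. C t = {}"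
    and C5: "\<exists>A::real set. finite A \<and>
        (\<forall>s t. s \<le> t \<and> \<not> (\<exists>a\<in>A. s < a \<and> a \<le> t) \<longrightarrow> C s = C t)"
    using C unfolding cliquegram_def by blast+
  have Ccl: "is_cliqset X (C t)" for t using C1 unfolding Cliq_def by simp
  have mono: "cliq_le (C s) (C t)" if "s \<le> t" for s t using C2 that by simp
  obtain Tt where Tt: "\<And>t. t \<ge> Tt \<Longrightarrow> C t = {X}" using C3 by auto
  obtain T0 where T0: "\<And>t. t \<le> T0 \<Longrightarrow> C t = {}" using C4 by auto
  obtain A :: "real set" where A: "finite A"
    and step0: "\<forall>s t. s \<le> t \<and> \<not> (\<exists>a\<in>A. s < a \<and> a \<le> t) \<longrightarrow> C s = C t"
    using C5 by (elim exE conjE)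
  have step: "C s = C t" if "s \<le> t" "\<not> (\<exists>a\<in>A. s < a \<and> a \<le> t)" for s t
    using step0 that by simp
  have mem: "c \<noteq> {} \<and> c \<subseteq> X" if "c \<in> C s" for s c
  proof -
    have "\<forall>c\<in>C s. c \<noteq> {} \<and> c \<subseteq> X" using Ccl[of s] unfolding is_cliqset_def by (elim conjE)
    then show ?thesis using that by simp
  qed
  have Cfin: "finite (C s)" for s
  proof (rule finite_subset)
    show "C s \<subseteq> Pow X" using mem by auto
    show "finite (Pow X)" using fin by simp
  qed
  have rep: "\<exists>s\<in>A. s \<le> t \<and> C s = C t" if ne: "C t \<noteq> {}" for t
  proof (cases "{a\<in>A. a \<le> t} = {}")
    case True
    have "C (min T0 t) = C t"
    proof (rule step)
      show "min T0 t \<le> t" by simp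
      show "\<not> (\<exists>a\<in>A. min T0 t < a \<and> a \<le> t)" using True by auto
    qed
    moreover have "C (min T0 t) = {}" by (rule T0) simp
    ultimately show ?thesis using ne by simp
  next
    case False
    define s where "s = Max {a\<in>A. a \<le> t}"
    have fs: "finite {a\<in>A. a \<le> t}" using A by simp
    have sin: "s \<in> {a\<in>A. a \<le> t}" unfolding s_def using Max_in[OF fs False] .
    have "C s = C t"
    proof (rule step)
      show "s \<le> t" using sin by simp
      show "\<not> (\<exists>a\<in>A. s < a \<and> a \<le> t)"
      proof
        assume "\<exists>a\<in>A. s < a \<and> a \<le> t"
        then obtain a where a: "a \<in> A" "s < a" "a \<le> t" by blast
        then have "a \<le> s" unfolding s_def using fs by (intro Max_ge) simp_all
        then show False using a(2) by simp
      qed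
    qed
    then show ?thesis using sin by auto
  qed
  define F where "F = (\<lambda>(s, c). Tg s c X Tt) ` (SIGMA s:A. C s)"
  have "finite (SIGMA s:A. C s)" using A Cfin by (intro finite_SigmaI)
  then have "finite F" unfolding F_def by (rule finite_imageI)
  moreover have "\<forall>T\<in>F. treegram X T"
  proof
    fix T assume "T \<in> F"
    then obtain s c where sc: "c \<in> C s" "T = Tg s c X Tt" unfolding F_def by auto
    have "c \<noteq> {}" "c \<subseteq> X" using mem[OF sc(1)] by simp_all
    then show "treegram X T" unfolding sc(2) by (rule Tg_treegram)
  qed
  moreover have "C = (\<lambda>t. cliq_Join ((\<lambda>T. T t) ` F))"
  proof
    fix t
    show "C t = cliq_Join ((\<lambda>T. T t) ` F)"
    proof (rule join_eq[OF Ccl, symmetric])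
      show "\<forall>E\<in>(\<lambda>T. T t) ` F. \<forall>c\<in>E. \<exists>d\<in>C t. c \<subseteq> d"
      proof (intro ballI)
        fix E e assume E: "E \<in> (\<lambda>T. T t) ` F" and e: "e \<in> E"
        then obtain s c where sc: "c \<in> C s" "E = Tg s c X Tt t"
          unfolding F_def by auto
        show "\<exists>d\<in>C t. e \<subseteq> d"
        proof (cases "t < s")
          case True then show ?thesis using e sc by (simp add: Tg_def)
        next
          case False
          show ?thesis
          proof (cases "t < Tt")
            case True
            then have "e = c" using e sc False by (simp add: Tg_def)
            moreover have "cliq_le (C s) (C t)" using False by (intro mono) simp
            ultimately show ?thesis using sc(1) unfolding cliq_le_def by simp
          next
            case F2: False
            then have "e = X" using e sc False by (simp add: Tg_def)
            moreover have "C t = {X}" using F2 by (intro Tt) simp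
            ultimately show ?thesis by simp
          qed
        qed
      qed
      show "\<forall>d\<in>C t. \<exists>E\<in>(\<lambda>T. T t) ` F. d \<in> E"
      proof
        fix d assume d: "d \<in> C t"
        then have "C t \<noteq> {}" by auto
        then obtain s where s: "s \<in> A" "s \<le> t" "C s = C t" using rep by blast
        have "(s, d) \<in> (SIGMA s:A. C s)" using s d by simp
        then have "Tg s d X Tt \<in> F" unfolding F_def by force
        moreover have "d \<in> Tg s d X Tt t"
        proof (cases "t < Tt")
          case True then show ?thesis using s by (simp add: Tg_def)
        next
          case False
          then have "C t = {X}" by (intro Tt) simp
          then show ?thesis using False d s by (simp add: Tg_def)
        qed
        ultimately show "\<exists>E\<in>(\<lambda>T. T t) ` F. d \<in> E" by blast
      qed
    qed
  qed
  ultimately show ?thesis by blast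
qed

theorem mainTheorem6:
  shows "(\<forall>(x::'a) y z. x \<noteq> y \<and> y \<noteq> z \<and> x \<noteq> z \<longrightarrow>
           (\<exists>T C1 C2 C3. treegram {x, y, z} T \<and>
              cliquegram {x, y, z} C1 \<and> cliquegram {x, y, z} C2 \<and> cliquegram {x, y, z} C3 \<and>
              C1 \<noteq> T \<and> C2 \<noteq> T \<and> C3 \<noteq> T \<and>
              T = (\<lambda>t. cliq_join (cliq_join (C1 t) (C2 t)) (C3 t))))
       \<and>
         (\<forall>(X::'b set) C. finite X \<and> cliquegram X C \<longrightarrow>
           (\<exists>F. finite F \<and> (\<forall>T\<in>F. treegram X T) \<and>
              C = (\<lambda>t. cliq_Join ((\<lambda>T. T t) ` F))))"
  apply (intro conjI allI impI)
   apply (elim conjE)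
   apply (rule part1; assumption)
  apply (elim conjE)
  apply (rule part2; assumption)
  done

end
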